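(* Let $F$ be a Banach lattice and $E$ a subspace of $F$. If $E$ is strongly dispersed, then $E$ is strictly dispersed.
   Context: Elements $x,y$ of a Banach lattice are disjoint if $|x|\wedge|y|=0$. $F^a$ denotes the closed ideal of order continuous elements of $F$. The una-topology on $F$ is the linear topology with zero neighborhood base $\{f\in F:\||f|\wedge h\|<\varepsilon\}$, $h\in F^a_+$, $\varepsilon>0$. $E$ is strongly dispersed if some una-neighborhood of $0_F$ is disjoint from the unit sphere $\mathrm{S}_E$ of $E$. $E$ is strictly dispersed if there is $\delta>0$ such that there is no disjoint sequence $(f_n)$ of norm-one elements of $F$ with $\mathrm{dist}(f_n,E)<\delta$ for all $n$. *)

theory Defs
  imports "HOL-Analysis.Analysis"
begin

class banach_lattice = banach + ordered_real_vector + lattice +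
  assumes lattice_norm_mono:
    "sup x (- x) \<le> sup y (- y) \<Longrightarrow> norm x \<le> norm y"

definition labs :: "'a::banach_lattice \<Rightarrow> 'a" where
  "labs x = sup x (- x)"

definition ldisjoint :: "'a::banach_lattice \<Rightarrow> 'a \<Rightarrow> bool" where
  "ldisjoint x y \<longleftrightarrow> inf (labs x) (labs y) = 0"

text \<open>x is order continuous: every net x_alpha with 0 <= x_alpha <= |x| and x_alpha decreasing
  to 0 converges to 0 in norm.  Decreasing nets are represented by their (nonempty,
  downward directed) range D, with inf D = 0; norm convergence of such a net is
  inf of the norms over D being 0 (norms are monotone on positive elements).\<close>
definition order_continuous :: "'a::banach_lattice \<Rightarrow> bool" where
  "order_continuous x \<longleftrightarrow>
     (\<forall>D. D \<noteq> {} \<and> D \<subseteq> {y. 0 \<le> y \<and> y \<le> labs x}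
        \<and> (\<forall>a\<in>D. \<forall>b\<in>D. \<exists>c\<in>D. c \<le> a \<and> c \<le> b)
        \<and> (\<forall>z. (\<forall>d\<in>D. z \<le> d) \<longrightarrow> z \<le> 0)
        \<longrightarrow> (\<forall>e>0. \<exists>d\<in>D. norm d < e))"

definition oc_part :: "'a::banach_lattice set" where
  "oc_part = {x. order_continuous x}"

definition una_nbhd :: "'a::banach_lattice \<Rightarrow> real \<Rightarrow> 'a set" where
  "una_nbhd h \<epsilon> = {f. norm (inf (labs f) h) < \<epsilon>}"

definition unit_sphere_of :: "'a::banach_lattice set \<Rightarrow> 'a set" where
  "unit_sphere_of E = {x \<in> E. norm x = 1}"

definition strongly_dispersed :: "'a::banach_lattice set \<Rightarrow> bool" where
  "strongly_dispersed E \<longleftrightarrow>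
     (\<exists>h \<epsilon>. h \<in> oc_part \<and> 0 \<le> h \<and> \<epsilon> > 0 \<and> una_nbhd h \<epsilon> \<inter> unit_sphere_of E = {})"

definition strictly_dispersed :: "'a::banach_lattice set \<Rightarrow> bool" where
  "strictly_dispersed E \<longleftrightarrow>
     (\<exists>\<delta>>0. \<not> (\<exists>f :: nat \<Rightarrow> 'a.
         (\<forall>n. norm (f n) = 1) \<and> (\<forall>n m. n \<noteq> m \<longrightarrow> ldisjoint (f n) (f m))
         \<and> (\<forall>n. infdist (f n) E < \<delta>)))"

end

theory Submission
  imports Defs "HOL-Library.Lattice_Algebras"
begin

subclass (in banach_lattice) lattice_ab_group_add ..

lemma labs_nonneg: "0 \<le> labs (x::'a::banach_lattice)"
proof -
  have "x \<le> labs x" "- x \<le> labs x" by (auto simp: labs_def)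
  then have "x + - x \<le> labs x + labs x" by (rule add_mono)
  then show ?thesis by simp
qed

lemma labs_pos: "0 \<le> (x::'a::banach_lattice) \<Longrightarrow> labs x = x"
  unfolding labs_def
  by (metis neg_le_0_iff_le order_trans sup.absorb1)

lemma norm_mono_pos:
  fixes a b :: "'a::banach_lattice"
  assumes "0 \<le> a" "a \<le> b" shows "norm a \<le> norm b"
proof -
  have "0 \<le> b" using assms by simp
  have "sup a (-a) \<le> sup b (-b)"
    using labs_pos[OF assms(1)] labs_pos[OF \<open>0 \<le> b\<close>] assms unfolding labs_def by simp
  then show ?thesis by (rule lattice_norm_mono)
qed

lemma norm_labs: "norm (labs (x::'a::banach_lattice)) = norm x"
proof -
  have l: "labs (labs x) = labs x" by (rule labs_pos[OF labs_nonneg])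
  have "sup (labs x) (- labs x) = sup x (- x)" using l unfolding labs_def by simp
  then have "norm (labs x) \<le> norm x" "norm x \<le> norm (labs x)"
    using lattice_norm_mono[of "labs x" x] lattice_norm_mono[of x "labs x"] by auto
  then show ?thesis by simp
qed

lemma labs_triangle: "labs ((x::'a::banach_lattice) + y) \<le> labs x + labs y"
proof -
  have h: "x \<le> labs x" "- x \<le> labs x" "y \<le> labs y" "- y \<le> labs y" by (auto simp: labs_def)
  have a: "x + y \<le> labs x + labs y" using add_mono[OF h(1) h(3)] .
  have b: "- x + - y \<le> labs x + labs y" using add_mono[OF h(2) h(4)] .
  have "- (x + y) = - x + - y" by (simp add: algebra_simps)
  with a b have "x + y \<le> labs x + labs y" "- (x + y) \<le> labs x + labs y"
    by auto
  then show ?thesis unfolding labs_def by simp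
qed

lemma inf_add_le:
  fixes x y h :: "'a::banach_lattice"
  assumes "0 \<le> y" shows "inf (x + y) h \<le> inf x h + y"
proof -
  have "inf x h + y = inf (x + y) (h + y)" by (rule add_inf_distrib_right)
  moreover have "h \<le> h + y" using assms by simp
  ultimately show ?thesis by (metis inf_mono order_refl)
qed

lemma inf_sum_le:
  fixes a b c :: "'a::banach_lattice"
  assumes "0 \<le> a" "0 \<le> b" "0 \<le> c"
  shows "inf (a + b) c \<le> inf a c + inf b c"
proof -
  define x where "x = inf (a + b) c"
  have "x - inf a c = sup (x - a) (x - c)"
    by (simp add: diff_inf_eq_sup add_sup_distrib_left)
  also have "\<dots> \<le> b"
  proof (rule sup_least)
    show "x - a \<le> b" unfolding x_def by (simp add: algebra_simps le_infI1)
    have "x - c \<le> 0" unfolding x_def by simp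
    then show "x - c \<le> b" using assms(2) by (rule order_trans)
  qed
  finally have 1: "x - inf a c \<le> b" .
  have "x - inf a c \<le> x" using assms by simp
  also have "x \<le> c" unfolding x_def by simp
  finally have 2: "x - inf a c \<le> c" .
  have "x - inf a c \<le> inf b c" using 1 2 by (rule le_infI)
  then have "(x - inf a c) + inf a c \<le> inf b c + inf a c" by (rule add_right_mono)
  then have "x \<le> inf b c + inf a c" by (simp only: diff_add_cancel)
  then show ?thesis unfolding x_def by (simp only: add.commute)
qed

lemma archimedean_bl:
  fixes z w :: "'a::banach_lattice"
  assumes "0 \<le> z" "\<And>k::nat. of_nat k *\<^sub>R z \<le> w"
  shows "z = 0"
proof -
  have "\<forall>k::nat. real k * norm z \<le> norm w"
  proof
    fix k :: nat
    have "norm (of_nat k *\<^sub>R z) \<le> norm w"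
      by (rule norm_mono_pos) (use assms in \<open>auto intro: scaleR_nonneg_nonneg\<close>)
    then show "real k * norm z \<le> norm w" by simp
  qed
  then have "norm z = 0"
    by (metis norm_ge_zero reals_Archimedean3 linorder_not_le order.not_eq_order_implies_strict)
  then show ?thesis by simp
qed

lemma disjoint_null:
  fixes h :: "'a::banach_lattice" and g :: "nat \<Rightarrow> 'a"
  assumes oc: "order_continuous h" and h0: "0 \<le> h"
    and g0: "\<And>n. 0 \<le> g n" and gh: "\<And>n. g n \<le> h"
    and dj: "\<And>n m. n \<noteq> m \<Longrightarrow> inf (g n) (g m) = 0"
    and e: "e > 0"
  shows "\<exists>N. \<forall>m\<ge>N. norm (g m) < e"
proof -
  define s where "s n = (\<Sum>k<n. g k)" for n
  have sS: "s (Suc n) = s n + g n" for n by (simp add: s_def)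
  have s0: "0 \<le> s n" for n
    by (induction n) (auto simp: sS intro: add_nonneg_nonneg g0 simp: s_def)
  have inv: "s n \<le> h \<and> (\<forall>m\<ge>n. inf (s n) (g m) = 0)" for n
  proof (induction n)
    case 0
    show ?case using h0 g0 by (simp add: s_def inf_absorb1)
  next
    case (Suc n)
    have dn: "inf (s n) (g n) = 0" using Suc by simp
    have "s n + g n = sup (s n) (g n) + inf (s n) (g n)" by (rule add_eq_inf_sup)
    then have "s (Suc n) = sup (s n) (g n)" using dn sS by simp
    then have 1: "s (Suc n) \<le> h" using Suc gh by simp
    have "inf (s (Suc n)) (g m) = 0" if "m \<ge> Suc n" for m
    proof -
      have "inf (s n + g n) (g m) \<le> inf (s n) (g m) + inf (g n) (g m)"
        by (rule inf_sum_le) (auto simp: s0 g0)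
      also have "\<dots> = 0" using Suc that dj[of n m] by simp
      finally have "inf (s (Suc n)) (g m) \<le> 0" by (simp add: sS)
      moreover have "0 \<le> inf (s (Suc n)) (g m)" using s0 g0 by simp
      ultimately show ?thesis by simp
    qed
    then show ?case using 1 by simp
  qed
  have smono: "s n \<le> s (n + k)" for n k
    by (induction k) (auto simp: sS intro: order_trans[OF _ add_increasing2[OF g0]])
  define U where "U = {u. u \<le> h \<and> (\<forall>n. s n \<le> u)}"
  define D where "D = {u - s n | u n. u \<in> U}"
  have hU: "h \<in> U" using inv by (simp add: U_def)
  have labsh: "labs h = h" using h0 by (rule labs_pos)
  have P1: "D \<noteq> {}" using hU by (auto simp: D_def)
  have P2: "D \<subseteq> {y. 0 \<le> y \<and> y \<le> labs h}"
  proof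
    fix y assume "y \<in> D"
    then obtain u n where y: "y = u - s n" "u \<in> U" by (auto simp: D_def)
    have "u - s n \<le> u" using s0 by simp
    moreover have "u \<le> h" using y by (simp add: U_def)
    ultimately have "u - s n \<le> h" by (rule order_trans)
    then show "y \<in> {y. 0 \<le> y \<and> y \<le> labs h}" using y labsh by (auto simp: U_def)
  qed
  have P3: "\<forall>a\<in>D. \<forall>b\<in>D. \<exists>c\<in>D. c \<le> a \<and> c \<le> b"
  proof (intro ballI)
    fix a b assume "a \<in> D" "b \<in> D"
    then obtain u n u' n' where a: "a = u - s n" "u \<in> U" and b: "b = u' - s n'" "u' \<in> U"
      by (auto simp: D_def)
    have iU: "inf u u' \<in> U" using a b by (auto simp: U_def le_infI1)
    have m1: "s n \<le> s (max n n')" using smono[of n "max n n' - n"] by simp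
    have m2: "s n' \<le> s (max n n')" using smono[of n' "max n n' - n'"] by simp
    have "inf u u' - s (max n n') \<le> a" using a m1
      by (metis diff_mono inf.cobounded1)
    moreover have "inf u u' - s (max n n') \<le> b" using b m2
      by (metis diff_mono inf.cobounded2)
    moreover have "inf u u' - s (max n n') \<in> D" using iU by (auto simp: D_def)
    ultimately show "\<exists>c\<in>D. c \<le> a \<and> c \<le> b" by blast
  qed
  have P4: "\<forall>z. (\<forall>d\<in>D. z \<le> d) \<longrightarrow> z \<le> 0"
  proof (intro allI impI)
    fix z assume zD: "\<forall>d\<in>D. z \<le> d"
    define p where "p = sup z 0"
    have p0: "0 \<le> p" by (simp add: p_def)
    have step: "u - p \<in> U" if "u \<in> U" for u
    proof -
      have "p \<le> u - s n" for n
      proof -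
        have "u - s n \<in> D" using that by (auto simp: D_def)
        then have "z \<le> u - s n" using zD by blast
        moreover have "0 \<le> u - s n" using that by (simp add: U_def)
        ultimately show ?thesis by (simp add: p_def)
      qed
      then have "s n \<le> u - p" for n by (simp add: le_diff_eq algebra_simps)
      moreover have "u - p \<le> h" using that p0 by (auto simp: U_def intro: order_trans[of _ u])
      ultimately show ?thesis by (simp add: U_def)
    qed
    have kU: "h - of_nat k *\<^sub>R p \<in> U" for k
    proof (induction k)
      case 0 then show ?case using hU by simp
    next
      case (Suc k)
      have "h - of_nat k *\<^sub>R p - p \<in> U" using step[OF Suc] .
      then show ?case by (simp add: algebra_simps)
    qed
    have "of_nat k *\<^sub>R p \<le> h" for k
    proof -
      have "s 0 \<le> h - of_nat k *\<^sub>R p" using kU[of k] by (simp add: U_def)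
      then show ?thesis by (simp add: s_def le_diff_eq)
    qed
    then have "p = 0" using archimedean_bl[OF p0] by blast
    then show "z \<le> 0" unfolding p_def by (metis sup.cobounded1)
  qed
  from oc[unfolded order_continuous_def, rule_format, OF conjI[OF P1 conjI[OF P2 conjI[OF P3 P4]]] e]
  obtain d where "d \<in> D" "norm d < e" by blast
  then obtain u n where d: "d = u - s n" "u \<in> U" by (auto simp: D_def)
  have "norm (g m) < e" if "m \<ge> n" for m
  proof -
    have "s (Suc m) \<le> u" using d by (simp add: U_def)
    then have "g m \<le> u - s m" using sS by (simp add: le_diff_eq algebra_simps)
    also have "u - s m \<le> u - s n" using smono[of n "m - n"] that by simp
    finally have "norm (g m) \<le> norm (u - s n)" using g0 by (intro norm_mono_pos) auto
    then show ?thesis using \<open>norm d < e\<close> d by simp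
  qed
  then show ?thesis by blast
qed

theorem proposition4p3:
  fixes E :: "'a::banach_lattice set"
  assumes "subspace E"
    and "strongly_dispersed E"
  shows "strictly_dispersed E"
proof -
  obtain h \<epsilon> where hoc: "h \<in> oc_part" and h0: "0 \<le> h" and ep: "\<epsilon> > 0"
    and disj: "una_nbhd h \<epsilon> \<inter> unit_sphere_of E = {}"
    using assms(2) unfolding strongly_dispersed_def by blast
  define \<delta> where "\<delta> = min (\<epsilon> / 4) (1/2)"
  have dpos: "\<delta> > 0" using ep by (simp add: \<delta>_def)
  have E0: "0 \<in> E" using assms(1) by (rule subspace_0)
  have "\<not> (\<exists>f :: nat \<Rightarrow> 'a.
         (\<forall>n. norm (f n) = 1) \<and> (\<forall>n m. n \<noteq> m \<longrightarrow> ldisjoint (f n) (f m))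
         \<and> (\<forall>n. infdist (f n) E < \<delta>))"
  proof
    assume "\<exists>f :: nat \<Rightarrow> 'a.
         (\<forall>n. norm (f n) = 1) \<and> (\<forall>n m. n \<noteq> m \<longrightarrow> ldisjoint (f n) (f m))
         \<and> (\<forall>n. infdist (f n) E < \<delta>)"
    then obtain f :: "nat \<Rightarrow> 'a" where f1: "\<And>n. norm (f n) = 1"
      and fd: "\<And>n m. n \<noteq> m \<Longrightarrow> ldisjoint (f n) (f m)"
      and fE: "\<And>n. infdist (f n) E < \<delta>" by blast
    define g where "g n = inf (labs (f n)) h" for n
    have g0: "0 \<le> g n" for n using labs_nonneg h0 by (simp add: g_def)
    have gh: "g n \<le> h" for n by (simp add: g_def)
    have gd: "inf (g n) (g m) = 0" if "n \<noteq> m" for n m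
    proof -
      have "inf (g n) (g m) \<le> inf (labs (f n)) (labs (f m))"
        unfolding g_def by (rule inf_mono) (rule inf.cobounded1)+
      also have "\<dots> = 0" using fd[OF that] by (simp add: ldisjoint_def)
      finally show ?thesis using g0[of n] g0[of m] by (simp add: antisym)
    qed
    have big: "norm (g n) \<ge> \<epsilon> / 2" for n
    proof -
      have "infdist (f n) E = (INF a\<in>E. dist (f n) a)" using E0 by (intro infdist_notempty) auto
      with fE[of n] have "(INF a\<in>E. dist (f n) a) < \<delta>" by simp
      then have "\<exists>a\<in>E. dist (f n) a < \<delta>"
        using E0 by (subst (asm) cINF_less_iff) auto
      then obtain x where xE: "x \<in> E" and dx: "dist (f n) x < \<delta>" by blast
      have nx: "\<bar>1 - norm x\<bar> < \<delta>"
        using dx f1[of n] norm_triangle_ineq3[of "f n" x] by (simp add: dist_norm)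
      have "\<delta> \<le> 1/2" by (simp add: \<delta>_def)
      then have xpos: "norm x > 0" using nx by linarith
      define y where "y = (1 / norm x) *\<^sub>R x"
      have yE: "y \<in> E" using assms(1) xE by (simp add: y_def subspace_scale)
      have ny: "norm y = 1" using xpos by (simp add: y_def)
      have "y \<in> unit_sphere_of E" using yE ny by (simp add: unit_sphere_of_def)
      then have "y \<notin> una_nbhd h \<epsilon>" using disj by blast
      then have ge: "\<epsilon> \<le> norm (inf (labs y) h)" by (simp add: una_nbhd_def)
      have "y - x = (1 / norm x - 1) *\<^sub>R x" by (simp add: y_def algebra_simps)
      then have "norm (y - x) = \<bar>1 / norm x - 1\<bar> * norm x" by simp
      also have "\<dots> = \<bar>(1 / norm x - 1) * norm x\<bar>" by (simp add: abs_mult)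
      also have "(1 / norm x - 1) * norm x = 1 - norm x" using xpos by (simp add: field_simps)
      finally have nyx: "norm (y - x) < \<delta>" using nx by simp
      have "norm (y - f n) \<le> norm (y - x) + norm (x - f n)"
        using norm_triangle_ineq[of "y - x" "x - f n"] by simp
      also have "\<dots> < 2 * \<delta>" using nyx dx by (simp add: dist_norm norm_minus_commute)
      finally have nyf: "norm (y - f n) < 2 * \<delta>" .
      have "labs y \<le> labs (f n) + labs (y - f n)"
        using labs_triangle[of "f n" "y - f n"] by simp
      then have "inf (labs y) h \<le> inf (labs (f n) + labs (y - f n)) h"
        by (simp add: le_infI1)
      also have "\<dots> \<le> g n + labs (y - f n)" unfolding g_def
        by (rule inf_add_le[OF labs_nonneg])
      finally have "norm (inf (labs y) h) \<le> norm (g n + labs (y - f n))"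
        using labs_nonneg h0 by (intro norm_mono_pos) auto
      also have "\<dots> \<le> norm (g n) + norm (labs (y - f n))" by (rule norm_triangle_ineq)
      also have "\<dots> = norm (g n) + norm (y - f n)" by (simp add: norm_labs)
      moreover have "\<delta> \<le> \<epsilon> / 4" by (simp add: \<delta>_def)
      ultimately show ?thesis using ge nyf by linarith
    qed
    have "\<epsilon> / 2 > 0" using ep by simp
    have "order_continuous h" using hoc by (simp add: oc_part_def)
    from disjoint_null[of h g "\<epsilon> / 2", OF this h0 g0 gh gd \<open>\<epsilon> / 2 > 0\<close>]
    obtain N where "\<forall>m\<ge>N. norm (g m) < \<epsilon> / 2" by blast
    with big[of N] show False by auto
  qed
  then show ?thesis unfolding strictly_dispersed_def using dpos by blast
qed

end
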